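(* Let $k\ge1$ and let $p_1<p_2<\dots<p_k$ be odd primes, $n=p_1\cdots p_k$. Then $$\prod_{i=1}^{k-2}p_i^{2^{k-i-1}-1}\le \varphi(n)^{2^{k-1}/k-1}.$$
   Context: $\varphi$ is Euler's totient function; an empty product equals $1$. *)

theory Defs
  imports "HOL-Number_Theory.Number_Theory"
begin

end

theory Submission imports Defs begin

lemma geo: "(\<Sum>i=s..s+m. (2::real)^(s+m+1-i)) = 2^(m+2) - 2"
proof (induction m)
  case 0 then show ?case by simp
next
  case (Suc m)
  have "(\<Sum>i=s..s+Suc m. (2::real)^(s+Suc m+1-i)) = (\<Sum>i=s..s+m. (2::real)^(s+Suc m+1-i)) + 2"
    by (simp add: sum.cl_ivl_Suc)
  also have "(\<Sum>i=s..s+m. (2::real)^(s+Suc m+1-i)) = (\<Sum>i=s..s+m. 2 * (2::real)^(s+m+1-i))"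
    by (rule sum.cong) (auto simp: Suc_diff_le)
  also have "\<dots> = 2 * (\<Sum>i=s..s+m. (2::real)^(s+m+1-i))" by (simp add: sum_distrib_left)
  also have "\<dots> = 2 * (2^(m+2) - 2)" using Suc by simp
  finally show ?case by simp
qed

lemma abel:
  fixes b d :: "nat \<Rightarrow> real"
  assumes mono: "\<And>j. m0 \<le> j \<Longrightarrow> j < k \<Longrightarrow> b j \<le> b (Suc j)"
    and tails: "\<And>t. m0 < t \<Longrightarrow> t \<le> k \<Longrightarrow> 0 \<le> (\<Sum>j=t..k. d j)"
  shows "m0 \<le> m \<Longrightarrow> m \<le> k \<Longrightarrow> (\<Sum>j=m..k. d j) * b m \<le> (\<Sum>j=m..k. d j * b j)"
proof (induction "k - m" arbitrary: m)
  case 0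
  then have "m = k" by simp
  then show ?case by simp
next
  case (Suc l)
  then have mk: "m < k" by simp
  have IH: "(\<Sum>j=Suc m..k. d j) * b (Suc m) \<le> (\<Sum>j=Suc m..k. d j * b j)"
    using Suc mk by simp
  have split1: "(\<Sum>j=m..k. d j) = d m + (\<Sum>j=Suc m..k. d j)"
    using mk by (simp add: sum.atLeast_Suc_atMost)
  have split2: "(\<Sum>j=m..k. d j * b j) = d m * b m + (\<Sum>j=Suc m..k. d j * b j)"
    using mk by (simp add: sum.atLeast_Suc_atMost)
  have bm: "b m \<le> b (Suc m)" using mono mk Suc by simp
  have "(\<Sum>j=Suc m..k. d j) * b m \<le> (\<Sum>j=Suc m..k. d j) * b (Suc m)"
    using tails[of "Suc m"] mk bm Suc by (simp add: mult_left_mono)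
  then show ?case using IH split1 split2 by (simp add: algebra_simps)
qed

lemma numeric:
  fixes m s :: nat
  assumes "m \<ge> 1" "s \<ge> 2"
  shows "real (m+s+1) * (2^(m+1) - 2 - real m) \<le> real m * (2^(m+s) - real (m+s+1))"
proof -
  obtain s' where s: "s = s' + 2" using assms(2) by (metis add.commute le_Suc_ex)
  define X :: real where "X = 2^(m+1)"
  define Y :: real where "Y = 2^(s'+1)"
  have XY: "(2::real)^(m+s) = X*Y" unfolding X_def Y_def s by (simp add: power_add[symmetric])
  have eq: "real m * (2^(m+s) - real (m+s+1)) - real (m+s+1) * (2^(m+1) - 2 - real m)
      = X * (real m * Y - real (m+s+1)) + 2 * real (m+s+1)"
    unfolding XY X_def[symmetric] by (simp add: algebra_simps)
  have X4: "X \<ge> 4" unfolding X_def using assms(1)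
    using power_increasing[of 2 "m+1" "2::real"] by simp
  have "0 \<le> X * (real m * Y - real (m+s+1)) + 2 * real (m+s+1)"
  proof (cases "s' \<ge> 2")
    case True
    have "Y \<ge> real s' + 4"
    proof -
      obtain r where r: "s' = r + 2" using True by (metis add.commute le_Suc_ex)
      have "(2::real)^(r+3) \<ge> real r + 6"
      proof (induction r)
        case 0 then show ?case by simp
      next
        case (Suc r)
        have "(2::real)^(Suc r+3) = 2*2^(r+3)" by (simp add: power_add)
        then show ?case using Suc by simp
      qed
      then show ?thesis unfolding Y_def r by (simp add: numeral_3_eq_3)
    qed
    then have "real m * Y \<ge> real m * (real s' + 4)" using assms(1) by (simp add: mult_left_mono)
    moreover have "real m * (real s' + 4) \<ge> real (m+s+1)"
    proof -
      have "m * s' \<ge> s'" using assms(1) by simp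
      moreover have "m * (s' + 4) = m * s' + 4 * m" by (simp add: algebra_simps)
      ultimately have "m * (s' + 4) \<ge> m + s + 1" using assms(1) s by linarith
      then have "real (m * (s' + 4)) \<ge> real (m + s + 1)" by (simp only: of_nat_le_iff)
      then show ?thesis by simp
    qed
    ultimately have "real m * Y - real (m+s+1) \<ge> 0" by simp
    then show ?thesis using X4 by simp
  next
    case False
    then consider "s' = 0" | "s' = 1" by linarith
    then show ?thesis
    proof cases
      case 1
      then have Y: "Y = 2" unfolding Y_def by simp
      consider "m = 1" | "m = 2" | "m \<ge> 3" using assms(1) by linarith
      then show ?thesis
      proof cases
        case 1 then have "X = 4" unfolding X_def by simp
        then show ?thesis using 1 Y s \<open>s'=0\<close> by simp
      next
        case 2 then have "X = 8" unfolding X_def by simp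
        then show ?thesis using 2 Y s \<open>s'=0\<close> by simp
      next
        case 3
        then show ?thesis using Y s \<open>s'=0\<close> X4 by simp
      qed
    next
      case 2
      then have Y: "Y = 4" unfolding Y_def by simp
      consider "m = 1" | "m \<ge> 2" using assms(1) by linarith
      then show ?thesis
      proof cases
        case 1 then have "X = 4" unfolding X_def by simp
        then show ?thesis using 1 Y s \<open>s'=1\<close> by simp
      next
        case 2
        then show ?thesis using Y s \<open>s'=1\<close> X4 by simp
      qed
    qed
  qed
  then show ?thesis using eq by linarith
qed

lemma odd_gap: "odd (a::nat) \<Longrightarrow> odd b \<Longrightarrow> a < b \<Longrightarrow> a + 2 \<le> b"
  by (auto elim!: oddE)

theorem theorem4:
  fixes k :: nat and p :: "nat \<Rightarrow> nat" and n :: nat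
  assumes "k \<ge> 1"
    and "\<And>i. i \<in> {1..k} \<Longrightarrow> prime (p i) \<and> odd (p i)"
    and "\<And>i j. i \<in> {1..k} \<Longrightarrow> j \<in> {1..k} \<Longrightarrow> i < j \<Longrightarrow> p i < p j"
    and "n = (\<Prod>i=1..k. p i)"
  shows "real (\<Prod>i=1..k-2. p i ^ (2 ^ (k - i - 1) - 1))
           \<le> real (totient n) powr (2 ^ (k - 1) / real k - 1)"
proof -
  have p3: "p i \<ge> 3" if "i \<in> {1..k}" for i
  proof -
    have "prime (p i)" "odd (p i)" using assms(2)[OF that] by auto
    then have "p i \<ge> 2" "p i \<noteq> 2" using prime_ge_2_nat by auto
    then show ?thesis by linarith
  qed
  have gap: "p i + 2 \<le> p j" if "i \<in> {1..k}" "j \<in> {1..k}" "i < j" for i j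
    using odd_gap[of "p i" "p j"] assms(2)[OF that(1)] assms(2)[OF that(2)] assms(3)[OF that] by auto
  have tot: "totient n = (\<Prod>i=1..k. p i - 1)"
  proof -
    have inj: "inj_on p {1..k}"
      by (rule inj_onI) (metis assms(3) linorder_neqE_nat less_irrefl)
    have pc: "pairwise coprime (p ` {1..k})"
      unfolding pairwise_def
      by (smt (verit) assms(2) image_iff primes_coprime)
    show ?thesis unfolding assms(4) using totient_prod_coprime[OF pc inj]
      by (simp add: totient_prime assms(2))
  qed
  define c :: real where "c = 2 ^ (k - 1) / real k - 1"
  have "0 < totient n" unfolding tot using p3
    by (intro prod_pos ballI) (fastforce)
  then have totpos: "real (totient n) > 0" by simp
  show ?thesis
  proof (cases "k \<le> 2")
    case True
    then have "k = 1 \<or> k = 2" using assms(1) by linarith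
    then have "c = 0" unfolding c_def by auto
    have "{1..k-2} = {}" using True by auto
    moreover note \<open>c = 0\<close>
    ultimately have ex: "2 ^ (k - 1) / real k - 1 = (0::real)" using c_def by simp
    show ?thesis unfolding ex using \<open>{1..k-2} = {}\<close> totpos by simp
  next
    case False
    define K where "K = k - 3"
    have K: "k = K + 3" using False unfolding K_def by simp
    define a where "a i = ln (real (p i))" for i
    define b where "b i = ln (real (p i) - 1)" for i
    define w :: "nat \<Rightarrow> real" where "w i = 2 ^ (k - i - 1) - 1" for i
    have realp: "real (p i) \<ge> 3" if "i \<in> {1..k}" for i using p3[OF that] by simp
    have realq: "real (totient n) = (\<Prod>i=1..k. real (p i) - 1)"
      unfolding tot of_nat_prod
    proof (rule prod.cong)
      fix i assume "i \<in> {1..k}"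
      then have "p i \<ge> 1" using p3 by fastforce
      then show "real (p i - 1) = real (p i) - 1" by (simp add: of_nat_diff)
    qed simp
    have qpos: "real (p i) - 1 > 0" if "i \<in> {1..k}" for i using realp[OF that] by simp
    have RHS: "real (totient n) powr (2 ^ (k - 1) / real k - 1) = exp (c * (\<Sum>j=1..k. b j))"
    proof -
      have e2: "ln (\<Prod>i=1..k. real (p i) - 1) = (\<Sum>j=1..k. b j)"
        unfolding b_def by (rule ln_prod) (simp, drule qpos, simp)
      have e1: "real (totient n) powr c = exp (c * ln (real (totient n)))"
        using totpos by (simp add: powr_def)
      show ?thesis unfolding c_def[symmetric] e1 unfolding realq e2 ..
    qed
    have e: "real (2 ^ (k - i - 1) - 1 :: nat) = w i" for i
      unfolding w_def by (subst of_nat_diff) auto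
    have LHS: "real (\<Prod>i=1..k-2. p i ^ (2 ^ (k - i - 1) - 1)) = exp (\<Sum>i=1..k-2. w i * a i)"
    proof -
      have "exp (\<Sum>i=1..k-2. w i * a i) = (\<Prod>i=1..k-2. exp (w i * a i))" by (rule exp_sum) simp
      also have "\<dots> = (\<Prod>i=1..k-2. real (p i ^ (2 ^ (k - i - 1) - 1)))"
      proof (rule prod.cong)
        fix i assume i: "i \<in> {1..k-2}"
        then have "i \<in> {1..k}" by auto
        then have "real (p i) > 0" using realp[of i] by auto
        then have "real (p i) ^ (2 ^ (k - i - 1) - 1) = exp (real (2 ^ (k - i - 1) - 1 :: nat) * a i)"
          unfolding a_def by (subst powr_realpow[symmetric]) (auto simp: powr_def)
        then show "exp (w i * a i) = real (p i ^ (2 ^ (k - i - 1) - 1))" using e by simp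
      qed simp
      finally show ?thesis by simp
    qed
    have main: "(\<Sum>i=1..k-2. w i * a i) \<le> c * (\<Sum>j=1..k. b j)"
    proof -
      have kc: "real k * c = 2^(K+2) - real k" unfolding c_def K by (simp add: field_simps)
      have wpos: "w i \<ge> 0" for i unfolding w_def by simp
      have FW: "(\<Sum>i=1..K+1. w i) = real k * c"
      proof -
        have g: "(\<Sum>i=1..1+K. (2::real)^(1+K+1-i)) = 2^(K+2) - 2" using geo[of 1 K] by simp
        have "(\<Sum>i=1..K+1. w i) = (\<Sum>i=1..1+K. (2::real)^(1+K+1-i)) - (\<Sum>i=1..K+1. 1)"
          unfolding w_def sum_subtractf by (simp add: K add.commute)
        then show ?thesis using g kc K by simp
      qed
      have c0: "c \<ge> 0"
      proof -
        have "(\<Sum>i=1..K+1. w i) \<ge> 0" using wpos by (simp add: sum_nonneg)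
        then have "real k * c \<ge> 0" using FW by simp
        then show ?thesis using K by (simp add: zero_le_mult_iff)
      qed
      have F3: "w 1 \<ge> 2 * c"
      proof -
        define Z :: real where "Z = 2^(K+1)"
        have w1: "w 1 = Z - 1" unfolding w_def Z_def K by simp
        have kc': "real k * c = 2 * Z - real k" using kc unfolding Z_def by simp
        have "real k * (Z - 1) \<ge> real k * (2 * c)"
        proof (cases "K = 0")
          case True
          then show ?thesis using kc' unfolding Z_def K by simp
        next
          case False
          then have "real k \<ge> 4" using K by simp
          moreover have "Z \<ge> 0" unfolding Z_def by simp
          ultimately have "Z * (real k - 4) \<ge> 0" by simp
          then show ?thesis using kc' by (simp add: algebra_simps)
        qed
        then show ?thesis using w1 K by (simp add: mult_le_cancel_left_pos)
      qed
      have p1k: "real (p k) \<ge> real (p 1) + 4"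
        using gap[of 1 2] gap[of 2 k] K by simp
      have F1: "2 * a 1 \<le> b 1 + b k"
      proof -
        have x3: "real (p 1) \<ge> 3" using realp[of 1] K by simp
        have "(real (p 1) - 1) * (real (p k) - 1) \<ge> (real (p 1) - 1) * (real (p 1) + 3)"
          using x3 p1k by (intro mult_left_mono) auto
        moreover have "(real (p 1) - 1) * (real (p 1) + 3) \<ge> real (p 1) ^ 2"
          using x3 by (simp add: algebra_simps power2_eq_square)
        ultimately have le: "real (p 1) ^ 2 \<le> (real (p 1) - 1) * (real (p k) - 1)" by linarith
        have pos: "0 < (real (p 1) - 1) * (real (p k) - 1)" using x3 p1k by (intro mult_pos_pos) auto
        have "2 * a 1 = ln (real (p 1) ^ 2)" unfolding a_def using x3 by (simp add: ln_realpow)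
        also have "\<dots> \<le> ln ((real (p 1) - 1) * (real (p k) - 1))"
          using le x3 pos by (subst ln_le_cancel_iff) auto
        also have "\<dots> = b 1 + b k" unfolding b_def using x3 p1k by (simp add: ln_mult)
        finally show ?thesis .
      qed
      have F2: "a i \<le> b (Suc i)" if "1 \<le> i" "i \<le> K+1" for i
      proof -
        have "real (p i) + 2 \<le> real (p (Suc i))" using gap[of i "Suc i"] that K by simp
        moreover have "real (p i) \<ge> 3" using realp[of i] that K by simp
        ultimately show ?thesis unfolding a_def b_def by (subst ln_le_cancel_iff) auto
      qed
      have Fm: "b j \<le> b (Suc j)" if "2 \<le> j" "j < K+2" for j
      proof -
        have "real (p j) + 2 \<le> real (p (Suc j))" using gap[of j "Suc j"] that K by simp
        moreover have "real (p j) \<ge> 3" using realp[of j] that K by simp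
        ultimately show ?thesis unfolding b_def by (subst ln_le_cancel_iff) auto
      qed
      define d where "d j = c - w (j - 1)" for j
      have tails: "0 \<le> (\<Sum>j=t..K+2. d j)" if "2 < t" "t \<le> K+2" for t
      proof -
        define m where "m = K + 2 - t"
        have tm: "K + 2 = t + m" unfolding m_def using that by simp
        have tm3: "3 + K = Suc (t + m)" using tm by simp
        have g: "(\<Sum>j=t..t+m. (2::real)^(t+m+1-j)) = 2^(m+2) - 2" by (rule geo)
        have ws: "(\<Sum>j=t..K+2. w (j - 1)) = (\<Sum>j=t..t+m. (2::real)^(t+m+1-j)) - (\<Sum>j=t..t+m. 1)"
          unfolding sum_subtractf[symmetric] tm
          by (rule sum.cong) (use that in \<open>auto simp: w_def K tm3\<close>)
        have cardt: "(\<Sum>j=t..t+m. (1::real)) = real m + 1" by simp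
        have ds: "(\<Sum>j=t..K+2. d j) = (real m + 1) * c - (2^(m+2) - 2 - (real m + 1))"
          unfolding d_def sum_subtractf ws g cardt using tm by simp
        have num: "real ((m+1) + (t-1) + 1) * (2^((m+1)+1) - 2 - real (m+1))
            \<le> real (m+1) * (2^((m+1)+(t-1)) - real ((m+1) + (t-1) + 1))"
          by (rule numeric) (use that in auto)
        have kk: "(m+1) + (t-1) + 1 = k" "(m+1)+(t-1) = K + 2" using tm that K by auto
        have num2: "real k * (2^(m+2) - 2 - (real m + 1)) \<le> (real m + 1) * (real k * c)"
          using num unfolding kk kc by (simp add: algebra_simps K)
        have "real k * ((real m + 1) * c - (2^(m+2) - 2 - (real m + 1))) \<ge> 0"
          using num2 by (simp add: algebra_simps)
        then show ?thesis unfolding ds using K by (simp add: zero_le_mult_iff)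
      qed
      have A: "(\<Sum>j=2..K+2. d j) * b 2 \<le> (\<Sum>j=2..K+2. d j * b j)"
        by (rule abel[of 2 "K+2" b d 2]) (use Fm tails in auto)
      have shiftw: "(\<Sum>j=2..K+2. w (j - 1)) = (\<Sum>i=1..K+1. w i)"
        using sum.shift_bounds_cl_Suc_ivl[of "\<lambda>j. w (j - 1)" 1 "K+1"] by (simp add: numeral_2_eq_2)
      have dsum: "(\<Sum>j=2..K+2. d j) = - 2 * c"
      proof -
        have "(\<Sum>j=2..K+2. d j) = real (K+1) * c - (\<Sum>j=2..K+2. w (j - 1))"
          unfolding d_def sum_subtractf by simp
        then show ?thesis unfolding shiftw FW K by (simp add: algebra_simps)
      qed
      have dbsum: "(\<Sum>j=2..K+2. d j * b j) = c * (\<Sum>j=2..K+2. b j) - (\<Sum>j=2..K+2. w (j - 1) * b j)"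
        unfolding d_def sum_distrib_left sum_subtractf[symmetric] by (rule sum.cong) (auto simp: algebra_simps)
      have S1: "(\<Sum>i=1..K+1. w i * a i) = w 1 * a 1 + (\<Sum>i=2..K+1. w i * a i)"
        using sum.atLeast_Suc_atMost[of 1 "K+1" "\<lambda>i. w i * a i"] by (simp add: numeral_2_eq_2)
      have S2: "(\<Sum>i=2..K+1. w i * a i) \<le> (\<Sum>i=2..K+1. w i * b (Suc i))"
        by (rule sum_mono) (use F2 wpos in \<open>auto intro: mult_left_mono\<close>)
      have S3: "(\<Sum>i=2..K+1. w i * b (Suc i)) = (\<Sum>j=3..K+2. w (j - 1) * b j)"
        using sum.shift_bounds_cl_Suc_ivl[of "\<lambda>j. w (j - 1) * b j" 2 "K+1"] by (simp add: numeral_3_eq_3)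
      have S4: "(\<Sum>j=2..K+2. w (j - 1) * b j) = w 1 * b 2 + (\<Sum>j=3..K+2. w (j - 1) * b j)"
        using sum.atLeast_Suc_atMost[of 2 "K+2" "\<lambda>j. w (j - 1) * b j"] by (simp add: numeral_3_eq_3)
      have S5: "(\<Sum>j=1..K+3. b j) = b 1 + (\<Sum>j=2..K+2. b j) + b (K+3)"
        using sum.atLeast_Suc_atMost[of 1 "K+3" b] sum.cl_ivl_Suc[of b 2 "K+2"]
        by (simp add: numeral_2_eq_2 numeral_3_eq_3)
      have T1: "2 * c * a 1 \<le> c * b 1 + c * b k"
        using mult_left_mono[OF F1 c0] by (simp add: algebra_simps)
      have T2: "(w 1 - 2 * c) * a 1 \<le> (w 1 - 2 * c) * b 2"
        using mult_left_mono[OF F2[of 1] ] F3 K by (simp add: numeral_2_eq_2)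
      have T2': "w 1 * a 1 - 2 * (c * a 1) \<le> w 1 * b 2 - 2 * (c * b 2)"
        using T2 by (simp add: algebra_simps)
      have T1': "2 * (c * a 1) \<le> c * b 1 + c * b (K+3)" using T1 K by simp
      have A': "- 2 * (c * b 2) \<le> c * (\<Sum>j=2..K+2. b j) - (\<Sum>j=2..K+2. w (j - 1) * b j)"
        using A unfolding dsum dbsum by (simp add: algebra_simps)
      have "(\<Sum>i=1..K+1. w i * a i) \<le> c * (b 1 + (\<Sum>j=2..K+2. b j) + b (K+3))"
      proof -
        have "(\<Sum>i=1..K+1. w i * a i) \<le> w 1 * a 1 + (\<Sum>j=3..K+2. w (j - 1) * b j)"
          using S1 S2 S3 by linarith
        also have "\<dots> \<le> c * b 1 + c * b (K+3) + w 1 * b 2 - 2 * (c * b 2) + (\<Sum>j=3..K+2. w (j - 1) * b j)"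
          using T1' T2' by linarith
        also have "\<dots> = c * b 1 + c * b (K+3) - 2 * (c * b 2) + (\<Sum>j=2..K+2. w (j - 1) * b j)"
          using S4 by linarith
        also have "\<dots> \<le> c * b 1 + c * b (K+3) + c * (\<Sum>j=2..K+2. b j)"
          using A' by linarith
        finally show ?thesis by (simp add: algebra_simps)
      qed
      then have "(\<Sum>i=1..K+1. w i * a i) \<le> c * (\<Sum>j=1..K+3. b j)"
        unfolding S5 .
      then show ?thesis using K by simp
    qed
    show ?thesis unfolding LHS RHS using main by simp
  qed
qed

end
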